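(* Let $n\ge 3$, $\nu=n-1$, and let $y=\{(y_{1i},y_{2i})\}_{i=1}^n$ be i.i.d. bivariate normal with mean $\mu=(\mu_1,\alpha+\beta\mu_1)$ and covariance $$\Sigma=\begin{pmatrix}\tau^2+\sigma_1^2&\beta\tau^2\\ \beta\tau^2&\beta^2\tau^2+\sigma_2^2\end{pmatrix},$$ with parameters $\mu_1,\alpha\in\mathbb R$, $\beta\neq0$, $\tau^2,\sigma_1^2,\sigma_2^2\ge0$. Let $\bar y$ be the sample mean vector and $S$ the sample covariance matrix (divisor $n-1$), assumed positive definite. Take the conditional prior of $(\mu_1,\alpha,\tau^2,\sigma_1^2,\sigma_2^2)$ given $\beta$ to be constant in $(\mu_1,\alpha)$ and equal to $|\beta|\,p(\Sigma\mid\beta)$ in $(\tau^2,\sigma_1^2,\sigma_2^2)$, where $$p(\Sigma\mid\beta)=K(\beta,\nu_0,\Psi_0(\beta))^{-1}|\Sigma|^{-(\nu_0+3)/2}\exp\!\big[-\tfrac12\operatorname{tr}(\Psi_0(\beta)\Sigma^{-1})\big]\ \text{ on } R_\beta,\qquad \Psi_0(\beta)=\nu_0\kappa_0^2\begin{pmatrix}1&\rho_0\beta\\ \rho_0\beta&\beta^2\end{pmatrix},$$ with $\nu_0>1$, $-1<\rho_0<1$, $\kappa_0>0$. Then the reduced sampling density $p(y\mid\beta)=\int p(y\mid\mu_1,\alpha,\beta,\tau^2,\sigma_1^2,\sigma_2^2)\,p(\mu_1,\alpha,\tau^2,\sigma_1^2,\sigma_2^2\mid\beta)\,d\mu_1\,d\alpha\,d\tau^2\,d\sigma_1^2\,d\sigma_2^2$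 is, as a function of $\beta$, equal to $C\cdot K(\beta,\nu_0+\nu,\Psi_0(\beta)+\nu S)/K(\beta,\nu_0,\Psi_0(\beta))$ with $C$ independent of $\beta$. Consequently, for any proper prior density $p(\beta)$, $$p(\beta\mid y)=\frac{p(\beta)\,K(\beta,\nu_0+\nu,\Psi_0(\beta)+\nu S)/K(\beta,\nu_0,\Psi_0(\beta))}{\int_{-\infty}^{\infty}p(\beta)\,K(\beta,\nu_0+\nu,\Psi_0(\beta)+\nu S)/K(\beta,\nu_0,\Psi_0(\beta))\,d\beta}.$$
   Context: For $\beta\ne0$, $R_\beta$ denotes the set of positive-definite symmetric $2\times2$ matrices $\Sigma$ with $\Sigma_{12}/\beta\ge0$, $\Sigma_{11}-\Sigma_{12}/\beta\ge0$, $\Sigma_{22}-\beta\Sigma_{12}\ge0$ (equivalently, those of the displayed form with $\tau^2,\sigma_1^2,\sigma_2^2\ge0$, up to a null set). For $\nu>1$ and a positive-definite symmetric $\Psi$, $K(\beta,\nu,\Psi)=\int_{R_\beta}|\Sigma|^{-(\nu+3)/2}\exp[-\tfrac12\operatorname{tr}(\Psi\Sigma^{-1})]\,d\Sigma_{11}\,d\Sigma_{12}\,d\Sigma_{22}$. The full sampling density is $(2\pi)^{-n}|\Sigma|^{-n/2}\exp\{-\tfrac12\operatorname{tr}[(n(\bar y-\mu)^{\top}(\bar y-\mu)+\nu S)\Sigma^{-1}]\}$, with $\bar y,\mu$ row vectors. *)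

theory Defs
  imports "HOL-Analysis.Analysis"
begin

text \<open>A symmetric 2x2 real matrix [[a,b],[b,c]] is represented by the triple (a,b,c),
  i.e. (Sigma11, Sigma12, Sigma22).\<close>

type_synonym sym2 = "real \<times> real \<times> real"

definition det2 :: "sym2 \<Rightarrow> real" where
  "det2 M = (case M of (a,b,c) \<Rightarrow> a * c - b ^ 2)"

definition pos_def2 :: "sym2 \<Rightarrow> bool" where
  "pos_def2 M = (case M of (a,b,c) \<Rightarrow> a > 0 \<and> a * c - b ^ 2 > 0)"

definition inv2 :: "sym2 \<Rightarrow> sym2" where
  "inv2 M = (case M of (a,b,c) \<Rightarrow> (c / det2 M, - b / det2 M, a / det2 M))"

text \<open>Trace of the product of two symmetric 2x2 matrices.\<close>
definition tr2 :: "sym2 \<Rightarrow> sym2 \<Rightarrow> real" where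
  "tr2 P Q = (case P of (p11,p12,p22) \<Rightarrow> case Q of (q11,q12,q22) \<Rightarrow>
       p11 * q11 + 2 * p12 * q12 + p22 * q22)"

definition add2 :: "sym2 \<Rightarrow> sym2 \<Rightarrow> sym2" where
  "add2 P Q = (case P of (p11,p12,p22) \<Rightarrow> case Q of (q11,q12,q22) \<Rightarrow>
       (p11 + q11, p12 + q12, p22 + q22))"

definition scale2 :: "real \<Rightarrow> sym2 \<Rightarrow> sym2" where
  "scale2 t P = (case P of (p11,p12,p22) \<Rightarrow> (t * p11, t * p12, t * p22))"

definition R_beta :: "real \<Rightarrow> sym2 set" where
  "R_beta \<beta> = {(s11,s12,s22). pos_def2 (s11,s12,s22) \<and> s12 / \<beta> \<ge> 0 \<and>
       s11 - s12 / \<beta> \<ge> 0 \<and> s22 - \<beta> * s12 \<ge> 0}"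

definition iw_kernel :: "real \<Rightarrow> sym2 \<Rightarrow> sym2 \<Rightarrow> real" where
  "iw_kernel \<nu> \<Psi> \<Sigma> = det2 \<Sigma> powr (- (\<nu> + 3) / 2) * exp (- tr2 \<Psi> (inv2 \<Sigma>) / 2)"

definition K :: "real \<Rightarrow> real \<Rightarrow> sym2 \<Rightarrow> real" where
  "K \<beta> \<nu> \<Psi> = (\<integral>\<Sigma>. indicator (R_beta \<beta>) \<Sigma> * iw_kernel \<nu> \<Psi> \<Sigma> \<partial>lborel)"

definition Psi0 :: "real \<Rightarrow> real \<Rightarrow> real \<Rightarrow> real \<Rightarrow> sym2" where
  "Psi0 \<nu>0 \<kappa>0 \<rho>0 \<beta> = scale2 (\<nu>0 * \<kappa>0 ^ 2) (1, \<rho>0 * \<beta>, \<beta> ^ 2)"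

definition Sigma_of :: "real \<Rightarrow> real \<Rightarrow> real \<Rightarrow> real \<Rightarrow> sym2" where
  "Sigma_of \<beta> t2 s1 s2 = (t2 + s1, \<beta> * t2, \<beta> ^ 2 * t2 + s2)"

definition binorm_pdf :: "real \<times> real \<Rightarrow> sym2 \<Rightarrow> real \<times> real \<Rightarrow> real" where
  "binorm_pdf m \<Sigma> x =
     (let d1 = fst x - fst m; d2 = snd x - snd m; Q = inv2 \<Sigma> in
      (2 * pi) powr (-1) * det2 \<Sigma> powr (- 1 / 2) *
      exp (- (fst Q * d1 ^ 2 + 2 * fst (snd Q) * d1 * d2 + snd (snd Q) * d2 ^ 2) / 2))"

definition sampling_density ::
  "nat \<Rightarrow> (nat \<Rightarrow> real) \<Rightarrow> (nat \<Rightarrow> real) \<Rightarrow> real \<Rightarrow> real \<Rightarrow> real \<Rightarrow> real \<Rightarrow> real \<Rightarrow> real \<Rightarrow> real" where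
  "sampling_density n y1 y2 \<mu>1 \<alpha> \<beta> t2 s1 s2 =
     (\<Prod>i<n. binorm_pdf (\<mu>1, \<alpha> + \<beta> * \<mu>1) (Sigma_of \<beta> t2 s1 s2) (y1 i, y2 i))"

definition prior_Sigma :: "real \<Rightarrow> real \<Rightarrow> real \<Rightarrow> real \<Rightarrow> sym2 \<Rightarrow> real" where
  "prior_Sigma \<nu>0 \<kappa>0 \<rho>0 \<beta> \<Sigma> =
     indicator (R_beta \<beta>) \<Sigma> * iw_kernel \<nu>0 (Psi0 \<nu>0 \<kappa>0 \<rho>0 \<beta>) \<Sigma> /
       K \<beta> \<nu>0 (Psi0 \<nu>0 \<kappa>0 \<rho>0 \<beta>)"

definition cond_prior :: "real \<Rightarrow> real \<Rightarrow> real \<Rightarrow> real \<Rightarrow> real \<Rightarrow> real \<Rightarrow> real \<Rightarrow> real \<Rightarrow> real" where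
  "cond_prior c \<nu>0 \<kappa>0 \<rho>0 \<beta> t2 s1 s2 =
     (if t2 \<ge> 0 \<and> s1 \<ge> 0 \<and> s2 \<ge> 0
      then c * \<bar>\<beta>\<bar> * prior_Sigma \<nu>0 \<kappa>0 \<rho>0 \<beta> (Sigma_of \<beta> t2 s1 s2) else 0)"

definition reduced_density ::
  "nat \<Rightarrow> (nat \<Rightarrow> real) \<Rightarrow> (nat \<Rightarrow> real) \<Rightarrow> real \<Rightarrow> real \<Rightarrow> real \<Rightarrow> real \<Rightarrow> real \<Rightarrow> real" where
  "reduced_density n y1 y2 c \<nu>0 \<kappa>0 \<rho>0 \<beta> =
     (\<integral>p. (case p of (\<mu>1, \<alpha>, t2, s1, s2) \<Rightarrow>
              sampling_density n y1 y2 \<mu>1 \<alpha> \<beta> t2 s1 s2 * cond_prior c \<nu>0 \<kappa>0 \<rho>0 \<beta> t2 s1 s2)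
        \<partial>(lborel :: (real \<times> real \<times> real \<times> real \<times> real) measure))"

definition sample_mean :: "nat \<Rightarrow> (nat \<Rightarrow> real) \<Rightarrow> real" where
  "sample_mean n x = (\<Sum>i<n. x i) / real n"

definition sample_cov :: "nat \<Rightarrow> (nat \<Rightarrow> real) \<Rightarrow> (nat \<Rightarrow> real) \<Rightarrow> sym2" where
  "sample_cov n y1 y2 =
     (let m1 = sample_mean n y1; m2 = sample_mean n y2 in
      ((\<Sum>i<n. (y1 i - m1) ^ 2) / (real n - 1),
       (\<Sum>i<n. (y1 i - m1) * (y2 i - m2)) / (real n - 1),
       (\<Sum>i<n. (y2 i - m2) ^ 2) / (real n - 1)))"

definition posterior :: "(real \<Rightarrow> real) \<Rightarrow> (real \<Rightarrow> real) \<Rightarrow> real \<Rightarrow> real" where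
  "posterior pb lik \<beta> = pb \<beta> * lik \<beta> / (\<integral>b. pb b * lik b \<partial>lborel)"

definition proper_density :: "(real \<Rightarrow> real) \<Rightarrow> bool" where
  "proper_density pb \<longleftrightarrow> (\<forall>b. pb b \<ge> 0) \<and> integrable lborel pb \<and> (\<integral>b. pb b \<partial>lborel) = 1"

end

theory Submission
  imports Defs "HOL-Probability.Distributions"
begin


lemma borel_fst[measurable]: "fst \<in> borel_measurable (borel :: ('a::euclidean_space \<times> 'b::euclidean_space) measure)"
  by (subst borel_prod[symmetric]) (rule measurable_fst)
lemma borel_snd[measurable]: "snd \<in> borel_measurable (borel :: ('a::euclidean_space \<times> 'b::euclidean_space) measure)"
  by (subst borel_prod[symmetric]) (rule measurable_snd)

lemma meas_pair_lborel:
  fixes f :: "'a::euclidean_space \<times> 'b::euclidean_space \<Rightarrow> ennreal"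
  assumes "f \<in> borel_measurable borel"
  shows "f \<in> borel_measurable (borel \<Otimes>\<^sub>M lborel)"
proof -
  have "sets (borel \<Otimes>\<^sub>M lborel) = sets (borel \<Otimes>\<^sub>M (borel :: 'b measure))"
    by (rule sets_pair_measure_cong) simp_all
  also have "\<dots> = sets (borel :: ('a \<times> 'b) measure)" unfolding borel_prod ..
  finally have S: "sets (borel \<Otimes>\<^sub>M lborel) = sets (borel :: ('a \<times> 'b) measure)" .
  show ?thesis by (subst measurable_cong_sets[OF S refl]) (rule assms)
qed

lemma nn_prod:
  fixes f :: "'a::euclidean_space \<times> 'b::euclidean_space \<Rightarrow> ennreal"
  assumes [measurable]: "f \<in> borel_measurable borel"
  shows "(\<integral>\<^sup>+p. f p \<partial>lborel) = (\<integral>\<^sup>+x. \<integral>\<^sup>+y. f (x,y) \<partial>lborel \<partial>lborel)"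
proof -
  have "(\<integral>\<^sup>+p. f p \<partial>lborel) = (\<integral>\<^sup>+p. f p \<partial>(lborel \<Otimes>\<^sub>M lborel))"
    by (simp only: lborel_prod)
  also have "\<dots> = (\<integral>\<^sup>+x. \<integral>\<^sup>+y. f (x,y) \<partial>lborel \<partial>lborel)"
    by (rule lborel.nn_integral_fst[symmetric]) (simp only: lborel_prod, simp)
  finally show ?thesis .
qed

lemma gauss1:
  fixes k m :: real assumes k: "k > 0"
  shows "(\<integral>\<^sup>+y. ennreal (exp (- k * (y - m)^2)) \<partial>lborel) = ennreal (sqrt (pi / k))"
proof -
  define s where "s = 1 / sqrt (2 * k)"
  have s: "s > 0" using k by (simp add: s_def)
  have s2: "2 * s^2 = 1 / k" using k by (simp add: s_def power_divide)
  have ks: "k * (2 * s^2) = 1" using s2 k by (simp add: field_simps)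
  have eq: "exp (- k * (y - m)^2) = sqrt (pi / k) * normal_density m s y" for y
  proof -
    have e1: "2 * pi * s^2 = pi / k" using s2 by (metis mult.commute mult.left_commute times_divide_eq_right mult_1_right)
    have e2: "(y - m)^2 / (2 * s^2) = k * (y - m)^2" unfolding s2 by simp
    have "normal_density m s y = 1 / sqrt (pi / k) * exp (- k * (y - m)^2)"
      unfolding normal_density_def minus_divide_left[symmetric] e1 e2 by simp
    then show ?thesis using k by simp
  qed
  have "(\<integral>\<^sup>+y. ennreal (exp (- k * (y - m)^2)) \<partial>lborel)
      = (\<integral>\<^sup>+y. ennreal (sqrt (pi / k)) * ennreal (normal_density m s y) \<partial>lborel)"
    by (intro nn_integral_cong, simp only: eq, rule ennreal_mult) (use k in auto)
  also have "\<dots> = ennreal (sqrt (pi / k)) * (\<integral>\<^sup>+y. ennreal (normal_density m s y) \<partial>lborel)"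
    by (rule nn_integral_cmult) simp
  also have "(\<integral>\<^sup>+y. ennreal (normal_density m s y) \<partial>lborel) = 1"
    by (subst nn_integral_eq_integral) (simp_all add: integrable_normal_density[OF s] integral_normal_density[OF s])
  finally show ?thesis by simp
qed

lemma gauss2:
  fixes k p q r u v :: real
  assumes k: "k > 0" and p: "p > 0" and d: "p * r - q^2 > 0"
  shows "(\<integral>\<^sup>+x. \<integral>\<^sup>+y. ennreal (exp (- k * (p * (x - u)^2 + 2 * q * (x - u) * (y - v) + r * (y - v)^2))) \<partial>lborel \<partial>lborel)
        = ennreal (pi / (k * sqrt (p * r - q^2)))"
proof -
  have r: "r > 0"
  proof (rule ccontr)
    assume "\<not> r > 0" then have "p * r \<le> 0" using p by (simp add: mult_nonneg_nonpos)
    then show False using d by (smt (verit) zero_le_power2)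
  qed
  define a where "a = p - q^2 / r"
  have a: "a > 0" using d r by (simp add: a_def field_simps)
  have inner: "(\<integral>\<^sup>+y. ennreal (exp (- k * (p * (x - u)^2 + 2 * q * (x - u) * (y - v) + r * (y - v)^2))) \<partial>lborel)
      = ennreal (sqrt (pi / (k * r))) * ennreal (exp (- (k * a) * (x - u)^2))" for x
  proof -
    define w where "w = v - q * (x - u) / r"
    have "exp (- k * (p * (x - u)^2 + 2 * q * (x - u) * (y - v) + r * (y - v)^2))
        = exp (- (k * a) * (x - u)^2) * exp (- (k * r) * (y - w)^2)" for y
    proof -
      have "p * (x - u)^2 + 2 * q * (x - u) * (y - v) + r * (y - v)^2 = a * (x - u)^2 + r * (y - w)^2"
        using r unfolding a_def w_def by (simp add: field_simps power2_eq_square)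
      then show ?thesis by (simp add: exp_add[symmetric] algebra_simps)
    qed
    then have "(\<integral>\<^sup>+y. ennreal (exp (- k * (p * (x - u)^2 + 2 * q * (x - u) * (y - v) + r * (y - v)^2))) \<partial>lborel)
      = (\<integral>\<^sup>+y. ennreal (exp (- (k * a) * (x - u)^2)) * ennreal (exp (- (k * r) * (y - w)^2)) \<partial>lborel)"
      by (intro nn_integral_cong) (simp add: ennreal_mult)
    also have "\<dots> = ennreal (exp (- (k * a) * (x - u)^2)) * (\<integral>\<^sup>+y. ennreal (exp (- (k * r) * (y - w)^2)) \<partial>lborel)"
      by (rule nn_integral_cmult) simp
    also have "\<dots> = ennreal (exp (- (k * a) * (x - u)^2)) * ennreal (sqrt (pi / (k * r)))"
      using k r by (subst gauss1) (auto intro: mult_pos_pos)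
    finally show ?thesis by (simp add: mult.commute)
  qed
  have "(\<integral>\<^sup>+x. \<integral>\<^sup>+y. ennreal (exp (- k * (p * (x - u)^2 + 2 * q * (x - u) * (y - v) + r * (y - v)^2))) \<partial>lborel \<partial>lborel)
      = (\<integral>\<^sup>+x. ennreal (sqrt (pi / (k * r))) * ennreal (exp (- (k * a) * (x - u)^2)) \<partial>lborel)"
    by (simp only: inner)
  also have "\<dots> = ennreal (sqrt (pi / (k * r))) * (\<integral>\<^sup>+x. ennreal (exp (- (k * a) * (x - u)^2)) \<partial>lborel)"
    by (rule nn_integral_cmult) simp
  also have "\<dots> = ennreal (sqrt (pi / (k * r))) * ennreal (sqrt (pi / (k * a)))"
    using k a by (subst gauss1) (auto intro: mult_pos_pos)
  also have "\<dots> = ennreal (sqrt (pi / (k * r)) * sqrt (pi / (k * a)))"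
    by (rule ennreal_mult[symmetric]) (use k r a in auto)
  also have "sqrt (pi / (k * r)) * sqrt (pi / (k * a)) = pi / (k * sqrt (p * r - q^2))"
  proof -
    have "sqrt (pi / (k * r)) * sqrt (pi / (k * a)) = sqrt ((pi / k)^2 / (r * a))"
      using k r a by (simp add: real_sqrt_mult[symmetric] field_simps power2_eq_square)
    also have "r * a = p * r - q^2" using r by (simp add: a_def field_simps)
    also have "sqrt ((pi / k)^2 / (p * r - q^2)) = pi / k / sqrt (p * r - q^2)"
      using k by (simp add: real_sqrt_divide)
    finally show ?thesis by simp
  qed
  finally show ?thesis .
qed


lemma shift1:
  fixes f :: "real \<Rightarrow> ennreal"
  assumes [measurable]: "f \<in> borel_measurable borel"
  shows "(\<integral>\<^sup>+x. f (t + x) \<partial>lborel) = (\<integral>\<^sup>+x. f x \<partial>lborel)"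
  using nn_integral_real_affine[of f 1 t] by simp

lemma scale1:
  fixes f :: "real \<Rightarrow> ennreal"
  assumes [measurable]: "f \<in> borel_measurable borel" and c: "c \<noteq> 0"
  shows "(\<integral>\<^sup>+x. f (c * x) \<partial>lborel) = ennreal (1 / \<bar>c\<bar>) * (\<integral>\<^sup>+x. f x \<partial>lborel)"
proof -
  have "(\<integral>\<^sup>+x. f x \<partial>lborel) = ennreal \<bar>c\<bar> * (\<integral>\<^sup>+x. f (c * x) \<partial>lborel)"
    using nn_integral_real_affine[of f c 0] c by simp
  then have "ennreal (1 / \<bar>c\<bar>) * (\<integral>\<^sup>+x. f x \<partial>lborel) = (ennreal (1 / \<bar>c\<bar>) * ennreal \<bar>c\<bar>) * (\<integral>\<^sup>+x. f (c * x) \<partial>lborel)"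
    by (simp add: mult.assoc)
  also have "ennreal (1 / \<bar>c\<bar>) * ennreal \<bar>c\<bar> = 1"
    using c by (simp add: ennreal_mult[symmetric])
  finally show ?thesis by simp
qed

lemma cv3:
  fixes F :: "real \<times> real \<times> real \<Rightarrow> ennreal" and \<beta> :: real
  assumes [measurable]: "F \<in> borel_measurable borel" and b: "\<beta> \<noteq> 0"
  shows "(\<integral>\<^sup>+r. F (fst r + fst (snd r), \<beta> * fst r, \<beta>^2 * fst r + snd (snd r)) \<partial>lborel)
       = ennreal (1 / \<bar>\<beta>\<bar>) * (\<integral>\<^sup>+S. F S \<partial>lborel)"
proof -
  define H where "H = (\<lambda>x u. \<integral>\<^sup>+z. F (x, u, z) \<partial>lborel)"
  have Hm[measurable]: "case_prod H \<in> borel_measurable borel"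
  proof -
    have "(\<lambda>w. F (fst (fst w), snd (fst w), snd w)) \<in> borel_measurable (borel \<Otimes>\<^sub>M lborel)"
      by (rule meas_pair_lborel) measurable
    from lborel.borel_measurable_nn_integral_fst[OF this]
    show ?thesis unfolding H_def case_prod_beta by simp
  qed
  have Hx: "(\<lambda>x. H x u) \<in> borel_measurable borel" for u
    using measurable_comp[OF borel_measurable_Pair[OF measurable_ident_sets[OF refl] borel_measurable_const] Hm]
    by (simp add: comp_def)
  have Hu: "(\<lambda>u. H x u) \<in> borel_measurable borel" for x
    using measurable_comp[OF borel_measurable_Pair[OF borel_measurable_const measurable_ident_sets[OF refl]] Hm]
    by (simp add: comp_def)
  have "(\<integral>\<^sup>+r. F (fst r + fst (snd r), \<beta> * fst r, \<beta>^2 * fst r + snd (snd r)) \<partial>lborel)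
      = (\<integral>\<^sup>+t. \<integral>\<^sup>+s. F (t + fst s, \<beta> * t, \<beta>^2 * t + snd s) \<partial>lborel \<partial>lborel)"
    by (subst nn_prod) simp_all
  also have "\<dots> = (\<integral>\<^sup>+t. \<integral>\<^sup>+s1. \<integral>\<^sup>+s2. F (t + s1, \<beta> * t, \<beta>^2 * t + s2) \<partial>lborel \<partial>lborel \<partial>lborel)"
    by (intro nn_integral_cong, subst nn_prod) simp_all
  also have "\<dots> = (\<integral>\<^sup>+t. \<integral>\<^sup>+s1. H (t + s1) (\<beta> * t) \<partial>lborel \<partial>lborel)"
    unfolding H_def by (intro nn_integral_cong shift1) simp
  also have "\<dots> = (\<integral>\<^sup>+t. \<integral>\<^sup>+x. H x (\<beta> * t) \<partial>lborel \<partial>lborel)"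
    by (rule nn_integral_cong, rule shift1[where f="\<lambda>x. H x _"], rule Hx)
  also have "\<dots> = (\<integral>\<^sup>+x. \<integral>\<^sup>+t. H x (\<beta> * t) \<partial>lborel \<partial>lborel)"
  proof (rule lborel_pair.Fubini')
    have "(\<lambda>p. case_prod H (fst p, \<beta> * snd p)) \<in> borel_measurable (borel :: (real \<times> real) measure)"
      by (rule measurable_comp[OF borel_measurable_Pair[OF borel_fst borel_measurable_times[OF borel_measurable_const borel_snd]] Hm, unfolded comp_def])
    then show "(\<lambda>(x, y). H x (\<beta> * y)) \<in> borel_measurable (lborel \<Otimes>\<^sub>M lborel)"
      by (subst lborel_prod) (simp add: case_prod_beta)
  qed
  also have "\<dots> = (\<integral>\<^sup>+x. ennreal (1 / \<bar>\<beta>\<bar>) * (\<integral>\<^sup>+u. H x u \<partial>lborel) \<partial>lborel)"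
    by (intro nn_integral_cong scale1 b) (use Hu in simp)
  also have "\<dots> = ennreal (1 / \<bar>\<beta>\<bar>) * (\<integral>\<^sup>+x. \<integral>\<^sup>+u. H x u \<partial>lborel \<partial>lborel)"
    by (rule nn_integral_cmult) (simp add: H_def)
  also have "(\<integral>\<^sup>+x. \<integral>\<^sup>+u. H x u \<partial>lborel \<partial>lborel) = (\<integral>\<^sup>+S. F S \<partial>lborel)"
  proof -
    have "(\<integral>\<^sup>+S. F S \<partial>lborel) = (\<integral>\<^sup>+x. \<integral>\<^sup>+w. F (x, w) \<partial>lborel \<partial>lborel)"
      by (rule nn_prod) simp
    also have "\<dots> = (\<integral>\<^sup>+x. \<integral>\<^sup>+u. H x u \<partial>lborel \<partial>lborel)"
      unfolding H_def by (intro nn_integral_cong, subst nn_prod) simp_all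
    finally show ?thesis by simp
  qed
  finally show ?thesis .
qed

lemma sum_dev_zero:
  fixes x :: "nat \<Rightarrow> real" assumes n: "n > 0"
  shows "(\<Sum>i<n. x i - sample_mean n x) = 0"
  using n by (simp add: sum_subtractf sample_mean_def)

lemma quad_sum:
  fixes x1 x2 :: "nat \<Rightarrow> real" and p q r m1 m2 :: real
  assumes n: "n > 0"
  defines "e1 \<equiv> sample_mean n x1 - m1" and "e2 \<equiv> sample_mean n x2 - m2"
  shows "(\<Sum>i<n. p * (x1 i - m1)^2 + 2 * q * (x1 i - m1) * (x2 i - m2) + r * (x2 i - m2)^2)
       = p * (\<Sum>i<n. (x1 i - sample_mean n x1)^2) + 2 * q * (\<Sum>i<n. (x1 i - sample_mean n x1) * (x2 i - sample_mean n x2))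
         + r * (\<Sum>i<n. (x2 i - sample_mean n x2)^2) + real n * (p * e1^2 + 2 * q * e1 * e2 + r * e2^2)"
proof -
  define a where "a = (\<lambda>i. x1 i - sample_mean n x1)"
  define b where "b = (\<lambda>i. x2 i - sample_mean n x2)"
  have eq: "p * (x1 i - m1)^2 + 2 * q * (x1 i - m1) * (x2 i - m2) + r * (x2 i - m2)^2
      = p * (a i)^2 + 2 * q * (a i * b i) + r * (b i)^2 + (2 * p * e1 + 2 * q * e2) * a i
        + (2 * q * e1 + 2 * r * e2) * b i + (p * e1^2 + 2 * q * e1 * e2 + r * e2^2)" for i
  proof -
    have "x1 i - m1 = a i + e1" "x2 i - m2 = b i + e2" by (simp_all add: a_def b_def e1_def e2_def)
    then show ?thesis by (simp add: power2_eq_square algebra_simps)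
  qed
  have sa: "(\<Sum>i<n. a i) = 0" "(\<Sum>i<n. b i) = 0"
    using sum_dev_zero[OF n] by (simp_all add: a_def b_def)
  show ?thesis
    unfolding eq by (simp add: sum.distrib sum_distrib_left[symmetric] sa a_def b_def sum_dev_zero[OF n])
qed


lemma binorm_eq:
  "binorm_pdf (m1, m2) S (x1, x2) = (2 * pi) powr (-1) * det2 S powr (- 1 / 2) *
     exp (- (fst (inv2 S) * (x1 - m1)^2 + 2 * fst (snd (inv2 S)) * (x1 - m1) * (x2 - m2) + snd (snd (inv2 S)) * (x2 - m2)^2) / 2)"
  by (simp add: binorm_pdf_def Let_def)

lemma meanint:
  fixes S :: sym2 and y1 y2 :: "nat \<Rightarrow> real"
  assumes pd: "pos_def2 S" and n: "n > 0"
  defines "T \<equiv> ((\<Sum>i<n. (y1 i - sample_mean n y1)^2),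
                (\<Sum>i<n. (y1 i - sample_mean n y1) * (y2 i - sample_mean n y2)),
                (\<Sum>i<n. (y2 i - sample_mean n y2)^2))"
  shows "(\<integral>\<^sup>+m1. \<integral>\<^sup>+m2. ennreal (\<Prod>i<n. binorm_pdf (m1, m2) S (y1 i, y2 i)) \<partial>lborel \<partial>lborel)
       = ennreal ((2 * pi) powr (1 - real n) / real n * det2 S powr (- (real n - 1) / 2) * exp (- tr2 T (inv2 S) / 2))"
proof -
  obtain a b c where S: "S = (a, b, c)" by (cases S)
  define d where "d = a * c - b^2"
  have a: "a > 0" and d: "d > 0" using pd by (simp_all add: S pos_def2_def d_def)
  have dS: "det2 S = d" by (simp add: S det2_def d_def)
  have c: "c > 0"
  proof (rule ccontr)
    assume "\<not> c > 0" then have "a * c \<le> 0" using a by (simp add: mult_nonneg_nonpos)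
    then show False using d unfolding d_def by (smt (verit) zero_le_power2)
  qed
  define p where "p = c / d"
  define q where "q = - b / d"
  define r where "r = a / d"
  have inv: "inv2 S = (p, q, r)" by (simp add: S inv2_def det2_def d_def p_def q_def r_def)
  have p: "p > 0" using c d by (simp add: p_def)
  have pq: "p * r - q^2 = 1 / d"
  proof -
    have "p * r - q^2 = (a * c - b^2) / d^2"
      using d unfolding p_def q_def r_def by (simp add: field_simps power2_eq_square)
    also have "\<dots> = d / d^2" by (simp add: d_def)
    finally show ?thesis using d by (simp add: power2_eq_square)
  qed
  define A where "A = (2 * pi) powr (-1) * d powr (- 1 / 2)"
  define Tr where "Tr = tr2 T (inv2 S)"
  have Tr: "Tr = p * fst T + 2 * q * fst (snd T) + r * snd (snd T)"
    by (simp add: Tr_def inv tr2_def T_def algebra_simps)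
  define B where "B = A ^ n * exp (- Tr / 2)"
  have B: "B \<ge> 0" by (simp add: B_def A_def)
  define g where "g = (\<lambda>m1 m2. exp (- (real n / 2) * (p * (m1 - sample_mean n y1)^2
       + 2 * q * (m1 - sample_mean n y1) * (m2 - sample_mean n y2) + r * (m2 - sample_mean n y2)^2)))"
  have prod: "(\<Prod>i<n. binorm_pdf (m1, m2) S (y1 i, y2 i)) = B * g m1 m2" for m1 m2
  proof -
    define E where "E = (\<lambda>i. p * (y1 i - m1)^2 + 2 * q * (y1 i - m1) * (y2 i - m2) + r * (y2 i - m2)^2)"
    have "(\<Prod>i<n. binorm_pdf (m1, m2) S (y1 i, y2 i)) = (\<Prod>i<n. A * exp (- E i / 2))"
      by (intro prod.cong refl) (simp add: binorm_eq inv dS A_def E_def)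
    also have "\<dots> = A ^ n * exp (- (\<Sum>i<n. E i) / 2)"
      by (simp add: prod.distrib exp_sum[symmetric] sum_divide_distrib sum_negf)
    also have "(\<Sum>i<n. E i) = Tr + real n * (p * (m1 - sample_mean n y1)^2
       + 2 * q * (m1 - sample_mean n y1) * (m2 - sample_mean n y2) + r * (m2 - sample_mean n y2)^2)"
      unfolding E_def quad_sum[OF n] Tr T_def
      by (simp add: power2_commute algebra_simps)
    finally show ?thesis
      by (simp add: B_def g_def exp_add[symmetric] field_simps)
  qed
  have "(\<integral>\<^sup>+m1. \<integral>\<^sup>+m2. ennreal (\<Prod>i<n. binorm_pdf (m1, m2) S (y1 i, y2 i)) \<partial>lborel \<partial>lborel)
      = (\<integral>\<^sup>+m1. \<integral>\<^sup>+m2. ennreal B * ennreal (g m1 m2) \<partial>lborel \<partial>lborel)"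
    by (simp add: prod ennreal_mult B g_def)
  also have "\<dots> = (\<integral>\<^sup>+m1. ennreal B * \<integral>\<^sup>+m2. ennreal (g m1 m2) \<partial>lborel \<partial>lborel)"
    by (intro nn_integral_cong nn_integral_cmult) (simp add: g_def)
  also have "\<dots> = ennreal B * (\<integral>\<^sup>+m1. \<integral>\<^sup>+m2. ennreal (g m1 m2) \<partial>lborel \<partial>lborel)"
    by (rule nn_integral_cmult) (simp add: g_def)
  also have "(\<integral>\<^sup>+m1. \<integral>\<^sup>+m2. ennreal (g m1 m2) \<partial>lborel \<partial>lborel) = ennreal (pi / (real n / 2 * sqrt (p * r - q^2)))"
    unfolding g_def by (rule gauss2) (use n p pq d in auto)
  also have "ennreal B * ennreal (pi / (real n / 2 * sqrt (p * r - q^2))) = ennreal (B * (pi / (real n / 2 * sqrt (p * r - q^2))))"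
    by (rule ennreal_mult[symmetric]) (use B n pq d in auto)
  also have "B * (pi / (real n / 2 * sqrt (p * r - q^2)))
      = (2 * pi) powr (1 - real n) / real n * det2 S powr (- (real n - 1) / 2) * exp (- tr2 T (inv2 S) / 2)"
  proof -
    have An: "A ^ n = (2 * pi) powr (- real n) * d powr (- real n / 2)"
    proof -
      have e1: "((2 * pi) powr (-1)) ^ n = (2 * pi) powr (- real n)" by (subst powr_power) simp_all
      have e2: "(d powr (- 1 / 2)) ^ n = d powr (- real n / 2)" using d by (subst powr_power) simp_all
      show ?thesis by (simp only: A_def power_mult_distrib e1 e2)
    qed
    have sq: "sqrt (p * r - q^2) = d powr (- 1 / 2)"
    proof -
      have "d powr (- 1 / 2) = d powr (- (1 / 2))" by simp
      also have "\<dots> = 1 / d powr (1 / 2)" by (rule powr_minus_divide)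
      also have "\<dots> = 1 / sqrt d" using d by (simp add: powr_half_sqrt)
      finally show ?thesis unfolding pq by (simp add: real_sqrt_divide)
    qed
    have "B * (pi / (real n / 2 * sqrt (p * r - q^2)))
        = ((2 * pi) powr (- real n) * (2 * pi)) * (d powr (- real n / 2) * d powr (1 / 2)) / real n * exp (- Tr / 2)"
      using n d unfolding B_def An sq by (simp add: field_simps powr_minus_divide)
    also have "(2 * pi) powr (- real n) * (2 * pi) = (2 * pi) powr (1 - real n)"
    proof -
      have "(2 * pi) powr (1 - real n) = (2 * pi) powr (- real n + 1)" by simp
      also have "\<dots> = (2 * pi) powr (- real n) * (2 * pi) powr 1" by (rule powr_add)
      finally show ?thesis by simp
    qed
    also have "d powr (- real n / 2) * d powr (1 / 2) = d powr (- (real n - 1) / 2)"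
      by (simp add: powr_add[symmetric] field_simps)
    finally show ?thesis by (simp add: dS Tr_def)
  qed
  finally show ?thesis .
qed

lemma det2_alt: "det2 M = fst M * snd (snd M) - (fst (snd M))^2"
  by (cases M) (simp add: det2_def)
lemma inv2_alt: "inv2 M = (snd (snd M) / det2 M, - fst (snd M) / det2 M, fst M / det2 M)"
  by (cases M) (simp add: inv2_def det2_def)
lemma tr2_alt: "tr2 P Q = fst P * fst Q + 2 * fst (snd P) * fst (snd Q) + snd (snd P) * snd (snd Q)"
  by (cases P, cases Q) (simp add: tr2_def)
lemma pos_def2_alt: "pos_def2 M = (fst M > 0 \<and> det2 M > 0)"
  by (cases M) (simp add: pos_def2_def det2_def)

lemma meas_det2[measurable]: "det2 \<in> borel_measurable borel"
  unfolding det2_alt[abs_def] by measurable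

lemma meas_iw[measurable]: "iw_kernel \<nu> \<Psi> \<in> borel_measurable borel"
  unfolding iw_kernel_def[abs_def] tr2_alt inv2_alt by measurable

lemma R_beta_alt: "R_beta \<beta> = {S. fst S > 0 \<and> det2 S > 0 \<and> fst (snd S) / \<beta> \<ge> 0 \<and>
    fst S - fst (snd S) / \<beta> \<ge> 0 \<and> snd (snd S) - \<beta> * fst (snd S) \<ge> 0}"
  by (auto simp: R_beta_def pos_def2_alt)

lemma R_beta_sets[measurable]: "R_beta \<beta> \<in> sets borel"
  unfolding R_beta_alt by measurable

lemma meas_binorm: "(\<lambda>w. binorm_pdf (fst w) (fst (snd w)) (snd (snd w))) \<in> borel_measurable borel"
  unfolding binorm_pdf_def Let_def inv2_alt by measurable

lemma point_mod:
  fixes f g :: "real \<Rightarrow> real"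
  assumes "\<And>x. x \<noteq> 0 \<Longrightarrow> f x = g x"
  shows "integral\<^sup>L lborel f = integral\<^sup>L lborel g"
proof -
  have mod: "h2 \<in> borel_measurable lborel" if "h1 \<in> borel_measurable lborel" "\<And>x. x \<noteq> 0 \<Longrightarrow> h1 x = h2 x"
    for h1 h2 :: "real \<Rightarrow> real"
  proof -
    have "h2 = (\<lambda>x. if x = 0 then h2 0 else h1 x)" using that(2) by (auto simp: fun_eq_iff)
    also have "\<dots> \<in> borel_measurable lborel" using that(1) by measurable
    finally show ?thesis .
  qed
  show ?thesis
  proof (cases "f \<in> borel_measurable lborel")
    case True
    then have "g \<in> borel_measurable lborel" using mod assms by blast
    with True show ?thesis
      by (intro integral_cong_AE) (auto intro: AE_mp[OF AE_lborel_singleton[of 0]] simp: assms)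
  next
    case False
    then have "g \<notin> borel_measurable lborel" using mod[of g f] assms by metis
    with False have "\<not> integrable lborel f" "\<not> integrable lborel g"
      using borel_measurable_integrable by blast+
    then show ?thesis by (simp add: not_integrable_integral_eq)
  qed
qed

lemma swap3:
  fixes F :: "real \<times> real \<times> 'c::euclidean_space \<Rightarrow> ennreal"
  assumes [measurable]: "F \<in> borel_measurable borel"
  shows "(\<integral>\<^sup>+p. F p \<partial>lborel) = (\<integral>\<^sup>+r. \<integral>\<^sup>+x. \<integral>\<^sup>+y. F (x, y, r) \<partial>lborel \<partial>lborel \<partial>lborel)"
proof -
  define G where "G = (\<lambda>x r. \<integral>\<^sup>+y. F (x, y, r) \<partial>lborel)"
  have Gm: "case_prod G \<in> borel_measurable borel"
  proof -
    have "(\<lambda>w. F (fst (fst w), snd w, snd (fst w))) \<in> borel_measurable (borel \<Otimes>\<^sub>M lborel)"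
      by (rule meas_pair_lborel) measurable
    from lborel.borel_measurable_nn_integral_fst[OF this]
    show ?thesis unfolding G_def case_prod_beta by simp
  qed
  have "(\<integral>\<^sup>+p. F p \<partial>lborel) = (\<integral>\<^sup>+x. \<integral>\<^sup>+w. F (x, w) \<partial>lborel \<partial>lborel)"
    by (rule nn_prod) simp
  also have "\<dots> = (\<integral>\<^sup>+x. \<integral>\<^sup>+y. \<integral>\<^sup>+r. F (x, y, r) \<partial>lborel \<partial>lborel \<partial>lborel)"
    by (intro nn_integral_cong, subst nn_prod) simp_all
  also have "\<dots> = (\<integral>\<^sup>+x. \<integral>\<^sup>+r. \<integral>\<^sup>+y. F (x, y, r) \<partial>lborel \<partial>lborel \<partial>lborel)"
  proof (intro nn_integral_cong)
    fix x :: real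
    have "(\<lambda>w. F (x, fst w, snd w)) \<in> borel_measurable (borel :: (real \<times> 'c) measure)"
      by measurable
    then show "(\<integral>\<^sup>+y. \<integral>\<^sup>+r. F (x, y, r) \<partial>lborel \<partial>lborel) = (\<integral>\<^sup>+r. \<integral>\<^sup>+y. F (x, y, r) \<partial>lborel \<partial>lborel)"
      by (intro lborel_pair.Fubini'[symmetric]) (subst lborel_prod, simp add: case_prod_beta)
  qed
  also have "\<dots> = (\<integral>\<^sup>+r. \<integral>\<^sup>+x. \<integral>\<^sup>+y. F (x, y, r) \<partial>lborel \<partial>lborel \<partial>lborel)"
    using Gm unfolding G_def
    by (intro lborel_pair.Fubini'[symmetric]) (subst lborel_prod, simp add: case_prod_beta)
  finally show ?thesis .
qed



lemma meas_binorm'[measurable (raw)]: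
  assumes "f \<in> borel_measurable M" "g \<in> borel_measurable M" "h \<in> borel_measurable M"
  shows "(\<lambda>x. binorm_pdf (f x) (g x) (h x)) \<in> borel_measurable M"
  using measurable_comp[OF borel_measurable_Pair[OF assms(1) borel_measurable_Pair[OF assms(2,3)]] meas_binorm]
  by (simp add: comp_def)

lemma binorm_nonneg: "binorm_pdf m S x \<ge> 0"
  by (simp add: binorm_pdf_def Let_def)

lemma iw_nonneg: "iw_kernel \<nu> \<Psi> S \<ge> 0"
  by (simp add: iw_kernel_def)

lemma K_nonneg: "K \<beta> \<nu> \<Psi> \<ge> 0"
  unfolding K_def by (intro integral_nonneg_AE) (simp add: iw_nonneg)

lemma K_nn: "K \<beta> \<nu> \<Psi> = enn2real (\<integral>\<^sup>+S. ennreal (indicator (R_beta \<beta>) S * iw_kernel \<nu> \<Psi> S) \<partial>lborel)"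
  unfolding K_def by (rule integral_eq_nn_integral) (simp_all add: iw_nonneg)

lemma inR:
  assumes b: "\<beta> \<noteq> 0"
  shows "Sigma_of \<beta> t2 s1 s2 \<in> R_beta \<beta> \<longleftrightarrow> t2 \<ge> 0 \<and> s1 \<ge> 0 \<and> s2 \<ge> 0 \<and> pos_def2 (Sigma_of \<beta> t2 s1 s2)"
proof -
  have "\<beta> * t2 / \<beta> = t2" using b by simp
  moreover have "\<beta>^2 * t2 + s2 - \<beta> * (\<beta> * t2) = s2" by (simp add: power2_eq_square)
  ultimately show ?thesis by (auto simp: R_beta_def Sigma_of_def)
qed

lemma reduced_formula:
  fixes n :: nat and y1 y2 :: "nat \<Rightarrow> real" and c \<nu>0 \<kappa>0 \<rho>0 \<beta> :: real
  assumes n3: "n \<ge> 3" and c: "c > 0" and b: "\<beta> \<noteq> 0"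
  shows "reduced_density n y1 y2 c \<nu>0 \<kappa>0 \<rho>0 \<beta>
       = (c * ((2 * pi) powr (1 - real n) / real n)) *
         (K \<beta> (\<nu>0 + (real n - 1)) (add2 (Psi0 \<nu>0 \<kappa>0 \<rho>0 \<beta>) (scale2 (real n - 1) (sample_cov n y1 y2)))
          / K \<beta> \<nu>0 (Psi0 \<nu>0 \<kappa>0 \<rho>0 \<beta>))"
proof -
  have n: "n > 0" using n3 by simp
  define \<nu> where "\<nu> = real n - 1"
  define \<Psi> where "\<Psi> = Psi0 \<nu>0 \<kappa>0 \<rho>0 \<beta>"
  define Kd where "Kd = K \<beta> \<nu>0 \<Psi>"
  define W where "W = scale2 \<nu> (sample_cov n y1 y2)"
  define T where "T = ((\<Sum>i<n. (y1 i - sample_mean n y1)^2),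
                (\<Sum>i<n. (y1 i - sample_mean n y1) * (y2 i - sample_mean n y2)),
                (\<Sum>i<n. (y2 i - sample_mean n y2)^2))"
  have WT: "W = T"
  proof -
    have nu: "\<nu> > 0" using n3 by (simp add: \<nu>_def)
    show ?thesis using nu unfolding W_def T_def scale2_def sample_cov_def Let_def \<nu>_def[symmetric] by simp
  qed
  define Cst where "Cst = (2 * pi) powr (1 - real n) / real n"
  define Mval where "Mval = (\<lambda>S. Cst * det2 S powr (- (real n - 1) / 2) * exp (- tr2 T (inv2 S) / 2))"
  define F0 where "F0 = (\<lambda>S. indicator (R_beta \<beta>) S * iw_kernel (\<nu>0 + \<nu>) (add2 \<Psi> W) S)"
  define samp where "samp = (\<lambda>m1 m2 S. \<Prod>i<n. binorm_pdf (m1, m2) S (y1 i, y2 i))"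
  define k where "k = c * \<bar>\<beta>\<bar> / Kd * Cst"
  have Kd: "Kd \<ge> 0" by (simp add: Kd_def K_nonneg)
  have Cst: "Cst \<ge> 0" by (simp add: Cst_def)
  have k: "k \<ge> 0" using c Kd Cst by (simp add: k_def)
  have samp_nn: "samp m1 m2 S \<ge> 0" for m1 m2 S
    unfolding samp_def by (intro prod_nonneg) (simp add: binorm_nonneg)
  have iwcomb: "Mval S * iw_kernel \<nu>0 \<Psi> S = Cst * iw_kernel (\<nu>0 + \<nu>) (add2 \<Psi> W) S" if "S \<in> R_beta \<beta>" for S
  proof -
    have d: "det2 S > 0" using that by (auto simp: R_beta_def pos_def2_def det2_def)
    have e1: "det2 S powr (- (real n - 1) / 2) * det2 S powr (- (\<nu>0 + 3) / 2) = det2 S powr (- (\<nu>0 + \<nu> + 3) / 2)"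
    proof -
      have ex: "- (real n - 1) / 2 + - (\<nu>0 + 3) / 2 = - (\<nu>0 + \<nu> + 3) / 2" by (simp add: \<nu>_def field_simps)
      show ?thesis by (simp only: powr_add[symmetric] ex)
    qed
    have e2: "tr2 (add2 \<Psi> W) (inv2 S) = tr2 \<Psi> (inv2 S) + tr2 T (inv2 S)"
      by (simp add: WT tr2_alt add2_def case_prod_beta algebra_simps)
    have e3: "exp (- (tr2 \<Psi> (inv2 S) + tr2 T (inv2 S)) / 2) = exp (- tr2 \<Psi> (inv2 S) / 2) * exp (- tr2 T (inv2 S) / 2)"
    proof -
      have "- (tr2 \<Psi> (inv2 S) + tr2 T (inv2 S)) / 2 = - tr2 \<Psi> (inv2 S) / 2 + - tr2 T (inv2 S) / 2" by simp
      then show ?thesis by (simp only: exp_add)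
    qed
    show ?thesis
      unfolding Mval_def iw_kernel_def e2 e3 e1[symmetric]
      by (simp only: mult_ac)
  qed
  have cp: "cond_prior c \<nu>0 \<kappa>0 \<rho>0 \<beta> t2 s1 s2 = c * \<bar>\<beta>\<bar> / Kd *
      (indicator (R_beta \<beta>) (Sigma_of \<beta> t2 s1 s2) * iw_kernel \<nu>0 \<Psi> (Sigma_of \<beta> t2 s1 s2))" for t2 s1 s2
    by (auto simp: cond_prior_def prior_Sigma_def inR[OF b] indicator_def Kd_def \<Psi>_def)
  define h where "h = (\<lambda>p::real\<times>real\<times>real\<times>real\<times>real. case p of (\<mu>1, \<alpha>, t2, s1, s2) \<Rightarrow>
              sampling_density n y1 y2 \<mu>1 \<alpha> \<beta> t2 s1 s2 * cond_prior c \<nu>0 \<kappa>0 \<rho>0 \<beta> t2 s1 s2)"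
  have red: "reduced_density n y1 y2 c \<nu>0 \<kappa>0 \<rho>0 \<beta> = integral\<^sup>L lborel h"
    by (simp add: reduced_density_def h_def)
  have h_alt: "h = (\<lambda>p. sampling_density n y1 y2 (fst p) (fst (snd p)) \<beta> (fst (snd (snd p))) (fst (snd (snd (snd p)))) (snd (snd (snd (snd p))))
         * cond_prior c \<nu>0 \<kappa>0 \<rho>0 \<beta> (fst (snd (snd p))) (fst (snd (snd (snd p)))) (snd (snd (snd (snd p)))))"
    by (simp add: h_def fun_eq_iff split: prod.splits)
  have hm[measurable]: "h \<in> borel_measurable borel"
    unfolding h_alt sampling_density_def cond_prior_def prior_Sigma_def Sigma_of_def by measurable
  have h_nn: "h p \<ge> 0" for p
    unfolding h_def sampling_density_def cp
    using c Kd by (auto split: prod.splits intro!: divide_nonneg_nonneg mult_nonneg_nonneg prod_nonneg binorm_nonneg iw_nonneg)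
  have inner: "(\<integral>\<^sup>+x. \<integral>\<^sup>+y. ennreal (h (x, y, r)) \<partial>lborel \<partial>lborel)
      = ennreal (k * F0 (Sigma_of \<beta> (fst r) (fst (snd r)) (snd (snd r))))" for r :: "real \<times> real \<times> real"
  proof -
    obtain t2 s1 s2 where r: "r = (t2, s1, s2)" by (cases r)
    define Sr where "Sr = Sigma_of \<beta> t2 s1 s2"
    define cpv where "cpv = cond_prior c \<nu>0 \<kappa>0 \<rho>0 \<beta> t2 s1 s2"
    have hxy: "h (x, y, r) = samp x (\<beta> * x + y) Sr * cpv" for x y
      by (simp add: h_def r sampling_density_def samp_def Sr_def cpv_def add.commute)
    show ?thesis
    proof (cases "Sr \<in> R_beta \<beta>")
      case False
      then have "cpv = 0" "F0 Sr = 0" by (simp_all add: cpv_def cp Sr_def F0_def)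
      then have "(\<integral>\<^sup>+x. \<integral>\<^sup>+y. ennreal (h (x, y, r)) \<partial>lborel \<partial>lborel) = 0"
        "F0 (Sigma_of \<beta> (fst r) (fst (snd r)) (snd (snd r))) = 0"
        by (simp_all only: hxy, simp_all add: r Sr_def)
      then show ?thesis by simp
    next
      case True
      have pd: "pos_def2 Sr" using True by (auto simp: R_beta_def)
      have cpv: "cpv = c * \<bar>\<beta>\<bar> / Kd * iw_kernel \<nu>0 \<Psi> Sr" "cpv \<ge> 0"
        using True c Kd by (simp_all add: cpv_def cp Sr_def iw_nonneg)
      have sm: "(\<lambda>y. ennreal (samp x y Sr)) \<in> borel_measurable borel" for x
        unfolding samp_def by measurable
      have "(\<integral>\<^sup>+x. \<integral>\<^sup>+y. ennreal (h (x, y, r)) \<partial>lborel \<partial>lborel)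
          = (\<integral>\<^sup>+x. \<integral>\<^sup>+y. ennreal (samp x (\<beta> * x + y) Sr) * ennreal cpv \<partial>lborel \<partial>lborel)"
        by (simp add: hxy ennreal_mult samp_nn cpv(2))
      also have "\<dots> = (\<integral>\<^sup>+x. (\<integral>\<^sup>+y. ennreal (samp x (\<beta> * x + y) Sr) \<partial>lborel) * ennreal cpv \<partial>lborel)"
        by (intro nn_integral_cong nn_integral_multc) (simp add: samp_def)
      also have "\<dots> = (\<integral>\<^sup>+x. \<integral>\<^sup>+y. ennreal (samp x (\<beta> * x + y) Sr) \<partial>lborel \<partial>lborel) * ennreal cpv"
        by (rule nn_integral_multc) (simp add: samp_def)
      also have "(\<integral>\<^sup>+x. \<integral>\<^sup>+y. ennreal (samp x (\<beta> * x + y) Sr) \<partial>lborel \<partial>lborel)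
          = (\<integral>\<^sup>+x. \<integral>\<^sup>+y. ennreal (samp x y Sr) \<partial>lborel \<partial>lborel)"
        by (intro nn_integral_cong shift1[where f="\<lambda>y. ennreal (samp _ y Sr)"] sm)
      also have "\<dots> = ennreal (Mval Sr)"
        unfolding samp_def Mval_def Cst_def using meanint[OF pd n, of y1 y2] by (simp add: T_def)
      also have "ennreal (Mval Sr) * ennreal cpv = ennreal (Mval Sr * cpv)"
        by (rule ennreal_mult[symmetric]) (simp_all add: cpv(2) Mval_def Cst_def)
      also have "Mval Sr * cpv = k * F0 Sr"
        using iwcomb[OF True] True by (simp add: cpv(1) k_def F0_def)
      finally show ?thesis by (simp add: r Sr_def)
    qed
  qed
  have F0_nn: "F0 S \<ge> 0" for S by (simp add: F0_def iw_nonneg)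
  have F0m[measurable]: "F0 \<in> borel_measurable borel" unfolding F0_def by measurable
  define N where "N = (\<integral>\<^sup>+S. ennreal (F0 S) \<partial>lborel)"
  have Kn: "K \<beta> (\<nu>0 + \<nu>) (add2 \<Psi> W) = enn2real N"
    unfolding N_def F0_def by (rule K_nn)
  have "(\<integral>\<^sup>+p. ennreal (h p) \<partial>lborel) = (\<integral>\<^sup>+r. \<integral>\<^sup>+x. \<integral>\<^sup>+y. ennreal (h (x, y, r)) \<partial>lborel \<partial>lborel \<partial>lborel)"
    by (rule swap3) simp
  also have "\<dots> = (\<integral>\<^sup>+r. ennreal (k * F0 (Sigma_of \<beta> (fst r) (fst (snd r)) (snd (snd r)))) \<partial>lborel)"
    by (simp only: inner)
  also have "\<dots> = (\<integral>\<^sup>+r. ennreal k * ennreal (F0 (Sigma_of \<beta> (fst r) (fst (snd r)) (snd (snd r)))) \<partial>lborel)"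
    by (intro nn_integral_cong ennreal_mult k F0_nn)
  also have "\<dots> = ennreal k * (\<integral>\<^sup>+r. ennreal (F0 (Sigma_of \<beta> (fst r) (fst (snd r)) (snd (snd r)))) \<partial>lborel)"
    by (rule nn_integral_cmult) (simp add: Sigma_of_def)
  also have "(\<integral>\<^sup>+r. ennreal (F0 (Sigma_of \<beta> (fst r) (fst (snd r)) (snd (snd r)))) \<partial>lborel) = ennreal (1 / \<bar>\<beta>\<bar>) * N"
    unfolding Sigma_of_def N_def by (rule cv3[OF _ b]) simp
  finally have nn: "(\<integral>\<^sup>+p. ennreal (h p) \<partial>lborel) = ennreal k * (ennreal (1 / \<bar>\<beta>\<bar>) * N)" .
  have "reduced_density n y1 y2 c \<nu>0 \<kappa>0 \<rho>0 \<beta> = enn2real (\<integral>\<^sup>+p. ennreal (h p) \<partial>lborel)"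
    unfolding red by (rule integral_eq_nn_integral) (simp_all add: h_nn)
  also have "\<dots> = k * (1 / \<bar>\<beta>\<bar>) * enn2real N"
    unfolding nn using k by (simp add: enn2real_mult)
  also have "\<dots> = (c * Cst) * (enn2real N / Kd)"
    using b by (simp add: k_def field_simps)
  finally show ?thesis
    unfolding Kn[symmetric] Cst_def Kd_def \<Psi>_def W_def \<nu>_def .
qed

theorem mainTheorem2:
  fixes n :: nat and y1 y2 :: "nat \<Rightarrow> real"
    and c \<nu>0 \<kappa>0 \<rho>0 :: real
  assumes n3: "n \<ge> 3"
    and Spd: "pos_def2 (sample_cov n y1 y2)"
    and c_pos: "c > 0"
    and nu0: "\<nu>0 > 1" and rho0: "-1 < \<rho>0" "\<rho>0 < 1" and kappa0: "\<kappa>0 > 0"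
  defines "\<nu> \<equiv> real n - 1"
  defines "ratio \<equiv> (\<lambda>\<beta>. K \<beta> (\<nu>0 + \<nu>) (add2 (Psi0 \<nu>0 \<kappa>0 \<rho>0 \<beta>) (scale2 \<nu> (sample_cov n y1 y2)))
                        / K \<beta> \<nu>0 (Psi0 \<nu>0 \<kappa>0 \<rho>0 \<beta>))"
  shows "(\<exists>C>0. \<forall>\<beta>. \<beta> \<noteq> 0 \<longrightarrow>
            reduced_density n y1 y2 c \<nu>0 \<kappa>0 \<rho>0 \<beta> = C * ratio \<beta>)
       \<and> (\<forall>pb. proper_density pb \<longrightarrow>
            (\<forall>\<beta>. \<beta> \<noteq> 0 \<longrightarrow>
               posterior pb (reduced_density n y1 y2 c \<nu>0 \<kappa>0 \<rho>0) \<beta>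
               = pb \<beta> * ratio \<beta> / (\<integral>b. pb b * ratio b \<partial>lborel)))"
proof -
  have nu: "\<nu> = real n - 1" using \<open>\<nu> \<equiv> real n - 1\<close> by simp
  define C where "C = c * ((2 * pi) powr (1 - real n) / real n)"
  have C: "C > 0" using c_pos n3 by (simp add: C_def)
  have lik: "reduced_density n y1 y2 c \<nu>0 \<kappa>0 \<rho>0 \<beta> = C * ratio \<beta>" if "\<beta> \<noteq> 0" for \<beta>
    unfolding \<open>ratio \<equiv> _\<close> nu C_def using reduced_formula[OF n3 c_pos that] by simp
  have part2: "posterior pb (reduced_density n y1 y2 c \<nu>0 \<kappa>0 \<rho>0) \<beta>
               = pb \<beta> * ratio \<beta> / (\<integral>b. pb b * ratio b \<partial>lborel)" if b: "\<beta> \<noteq> 0" for pb \<beta>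
  proof -
    have "(\<integral>b. pb b * reduced_density n y1 y2 c \<nu>0 \<kappa>0 \<rho>0 b \<partial>lborel) = (\<integral>b. C * (pb b * ratio b) \<partial>lborel)"
      by (rule point_mod) (simp add: lik)
    also have "\<dots> = C * (\<integral>b. pb b * ratio b \<partial>lborel)"
      by (rule integral_mult_right_zero)
    finally have I: "(\<integral>b. pb b * reduced_density n y1 y2 c \<nu>0 \<kappa>0 \<rho>0 b \<partial>lborel) = C * (\<integral>b. pb b * ratio b \<partial>lborel)" .
    have "pb \<beta> * (C * ratio \<beta>) / (C * (\<integral>b. pb b * ratio b \<partial>lborel)) = pb \<beta> * ratio \<beta> / (\<integral>b. pb b * ratio b \<partial>lborel)"
      using C by (simp add: mult.left_commute[of "pb \<beta>"])
    then show ?thesis unfolding posterior_def I lik[OF b] .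
  qed
  show ?thesis
    using C lik part2 by blast
qed

end
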